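(* Let $\mathbf U$ be a real $3\times3$ positive-definite symmetric matrix and $\hat{\mathbf e}$ a unit vector such that $\hat{\mathbf U}:=(-\mathbf I+2\hat{\mathbf e}\otimes\hat{\mathbf e})\mathbf U(-\mathbf I+2\hat{\mathbf e}\otimes\hat{\mathbf e})\neq\mathbf U$ and $\hat{\mathbf e}$ is, up to sign, the only unit vector with $\hat{\mathbf U}=(-\mathbf I+2\hat{\mathbf e}\otimes\hat{\mathbf e})\mathbf U(-\mathbf I+2\hat{\mathbf e}\otimes\hat{\mathbf e})$. Let $$\mathbf n_I=\hat{\mathbf e},\qquad \mathbf a_I=2\Big(\frac{\mathbf U^{-1}\hat{\mathbf e}}{|\mathbf U^{-1}\hat{\mathbf e}|^2}-\mathbf U\hat{\mathbf e}\Big),$$ and let $\hat{\mathbf R}\in\mathrm{SO}(3)$ satisfy $\hat{\mathbf R}\hat{\mathbf U}=\mathbf U+\mathbf a_I\otimes\mathbf n_I$, with $\mathbf a_I\ne0$. Suppose the cofactor conditions hold with $\mathbf a=\mathbf a_I$, $\mathbf n=\mathbf n_I$: (CC1) the middle eigenvalue of $\mathbf U$ is $1$; (CC2) $\mathbf a_I\cdot\mathbf U\,\mathrm{cof}(\mathbf U^2-\mathbf I)\mathbf n_I=0$; (CC3) $\mathrm{tr}\,\mathbf U^2-\det\mathbf U^2-\frac{|\mathbf a_I|^2|\mathbf n_I|^2}{4}-2\ge0$. For $f\in\{0,1\}$ let $(\mathbf R_f^\kappa,\mathbf b_f^\kappa\otimes\mathbf m_f^\kappa)$, $\kappa\in\{\pm1\}$,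 be the two distinct solutions $\mathbf R\in\mathrm{SO}(3)$, $\mathbf b,\mathbf m\in\mathbb R^3$ of $\mathbf R(\mathbf U+f\,\mathbf a_I\otimes\mathbf n_I)=\mathbf I+\mathbf b\otimes\mathbf m$. Then there are $\sigma,\sigma_*\in\{\pm1\}$ such that $\mathbf R_1^{\sigma_*}=\mathbf R_0^\sigma$ and $\mathbf b_1^{\sigma_*}=\xi\,\mathbf b_0^\sigma$ for some $\xi\ne0$, so that $$\mathbf R_0^\sigma\mathbf U=\mathbf I+\mathbf b_0^\sigma\otimes\mathbf m_0^\sigma,\qquad \mathbf R_0^\sigma(\mathbf U+\mathbf a_I\otimes\mathbf n_I)=\mathbf I+\mathbf b_0^\sigma\otimes\xi\mathbf m_1^{\sigma_*},$$ and consequently, for all $0\le f\le1$, $$\mathbf R_0^\sigma[\mathbf U+f\,\mathbf a_I\otimes\mathbf n_I]=\mathbf I+\mathbf b_0^\sigma\otimes\big(f\xi\mathbf m_1^{\sigma_*}+(1-f)\mathbf m_0^\sigma\big).$$ The three matrices $\mathbf I$, $\mathbf R_0^\sigma\mathbf U$, $\mathbf R_0^\sigma\hat{\mathbf R}\hat{\mathbf U}$ are pairwise rank-one connected: $$\mathbf R_0^\sigma\mathbf U-\mathbf I=\mathbf b_0^\sigma\otimes\mathbf m_0^\sigma,\quad \mathbf R_0^\sigma\hat{\mathbf R}\hat{\mathbf U}-\mathbf I=\mathbf b_0^\sigma\otimes\xi\mathbf m_1^{\sigma_*},\quad \mathbf R_0^\sigma\hat{\mathbf R}\hat{\mathbf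 U}-\mathbf R_0^\sigma\mathbf U=\mathbf R_0^\sigma\mathbf a_I\otimes\mathbf n_I.$$ Finally, there is a constant $c\ne0$ such that $c\,\mathbf n_I=\xi\mathbf m_1^{\sigma_*}-\mathbf m_0^\sigma$; in particular $\mathbf m_0^\sigma,\mathbf m_1^{\sigma_*},\mathbf n_I$ lie in a plane.
   Context: $\mathbf a\otimes\mathbf n$ is the matrix $\mathbf x\mapsto(\mathbf n\cdot\mathbf x)\mathbf a$; $\mathrm{cof}\,\mathbf A$ is the cofactor matrix of $\mathbf A$. Under the stated hypotheses, for $f\in\{0,1\}$ the equation $\mathbf R(\mathbf U+f\,\mathbf a_I\otimes\mathbf n_I)=\mathbf I+\mathbf b\otimes\mathbf m$ has exactly two distinct solutions $(\mathbf R,\mathbf b\otimes\mathbf m)$, labeled by $\kappa=\pm1$ (solutions distinguished by the pair $(\mathbf R,\mathbf b\otimes\mathbf m)$). *)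

theory Defs
  imports "HOL-Analysis.Analysis"
begin

type_synonym vec3 = "real ^ 3"
type_synonym mat3 = "real ^ 3 ^ 3"

definition outer :: "real ^ 'n \<Rightarrow> real ^ 'n \<Rightarrow> real ^ 'n ^ 'n" where
  "outer a n = (\<chi> i j. a $ i * n $ j)"

text \<open>Cofactor matrix: entry (i,j) is the determinant of A with row i replaced by
  the j-th standard basis row, i.e. (-1)^(i+j) times the (i,j) minor.\<close>
definition cof :: "real ^ 'n ^ 'n \<Rightarrow> real ^ 'n ^ 'n" where
  "cof A = (\<chi> i j. det (\<chi> k l. if k = i then (if l = j then 1 else 0) else A $ k $ l))"

definition sym_pos_def :: "real ^ 'n ^ 'n \<Rightarrow> bool" where
  "sym_pos_def U \<longleftrightarrow> transpose U = U \<and> (\<forall>x. x \<noteq> 0 \<longrightarrow> x \<bullet> (U *v x) > 0)"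

definition middle_eigenvalue :: "mat3 \<Rightarrow> real \<Rightarrow> bool" where
  "middle_eigenvalue U l2 \<longleftrightarrow>
     (\<exists>l1 l3. l1 \<le> l2 \<and> l2 \<le> l3 \<and>
        (\<forall>t. det (U - t *\<^sub>R mat 1) = (l1 - t) * (l2 - t) * (l3 - t)))"

definition refl_mat :: "vec3 \<Rightarrow> mat3" where
  "refl_mat e = - mat 1 + 2 *\<^sub>R outer e e"

end

theory Submission imports Defs begin

lemmas cs = vec_eq_iff forall_3 sum_3 matrix_matrix_mult_def matrix_vector_mult_def inner_vec_def
  outer_def mat_def transpose_def cross_components

lemma mv_dot: "(A *v x) \<bullet> y = x \<bullet> (transpose A *v y)" for A::mat3 and x y::vec3
  by (simp add: cs algebra_simps)
lemma outer_mv: "outer a n *v x = (n \<bullet> x) *\<^sub>R a" for a n x :: vec3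
  by (simp add: cs algebra_simps)
lemma mult_outer: "A ** outer a n = outer (A *v a) n" for a n :: vec3 and A :: mat3
  by (simp add: cs algebra_simps)
lemma outer_mult: "outer a n ** A = outer a (transpose A *v n)" for a n :: vec3 and A :: mat3
  by (simp add: cs algebra_simps)
lemma det_I_outer: "det (mat 1 + outer x y) = 1 + x \<bullet> y" for x y :: vec3
  by (simp add: det_3 cs algebra_simps)
lemma adj: "A ** transpose (cof A) = det A *\<^sub>R mat 1" for A :: mat3
  unfolding cof_def by (simp add: det_3 cs algebra_simps)
lemma ro_row: fixes r p q x :: vec3
  assumes "r \<bullet> p = 0" "r \<bullet> q = 0"
  shows "((cross3 p q) \<bullet> (cross3 p q)) * (r \<bullet> x) = ((cross3 p q) \<bullet> x) * (r \<bullet> (cross3 p q))"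
  using assms by (simp add: inner_vec_def sum_3 cross_components) algebra

lemma mv_comp: "(M *v x) $ i = M $ i \<bullet> x" for M :: mat3
  by (simp add: matrix_vector_mult_def inner_vec_def)

lemma RO:
  fixes M :: mat3 and p q :: vec3
  assumes "M *v p = 0" "M *v q = 0" "cross3 p q \<noteq> 0"
  shows "M = outer ((1 / (cross3 p q \<bullet> cross3 p q)) *\<^sub>R (M *v cross3 p q)) (cross3 p q)"
proof -
  let ?n = "cross3 p q"
  have nn: "?n \<bullet> ?n \<noteq> 0" using assms(3) by simp
  show ?thesis
  proof (subst matrix_eq, intro allI)
    fix x
    show "M *v x = outer ((1 / (?n \<bullet> ?n)) *\<^sub>R (M *v ?n)) ?n *v x"
    proof (subst vec_eq_iff, intro allI)
      fix i
      have "M $ i \<bullet> p = 0" "M $ i \<bullet> q = 0" using assms(1,2) mv_comp[of M p i] mv_comp[of M q i] by auto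
      from ro_row[OF this, of x]
      have "(?n \<bullet> ?n) * (M $ i \<bullet> x) = (?n \<bullet> x) * (M $ i \<bullet> ?n)" .
      then show "(M *v x) $ i = (outer ((1 / (?n \<bullet> ?n)) *\<^sub>R (M *v ?n)) ?n *v x) $ i"
        using nn by (simp add: outer_mv mv_comp field_simps)
    qed
  qed
qed

lemma transpose_outer: "transpose (outer a b) = outer b a" for a b :: vec3
  by (simp add: cs)
lemma cof_transpose: "cof (transpose A) = transpose (cof A)" for A::mat3
  unfolding cof_def by (simp add: det_3 cs algebra_simps)
lemma cof_zero: "cof (0::mat3) = 0"
  unfolding cof_def by (simp add: det_3 cs)
lemma cof_zero_rows: "cof (A::mat3) = 0 \<Longrightarrow> cross3 (A$1) (A$2) = 0 \<and> cross3 (A$1) (A$3) = 0 \<and> cross3 (A$2) (A$3) = 0"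
  unfolding cof_def by (simp add: det_3 cs algebra_simps) 
lemma lagr: "cross3 a b = 0 \<Longrightarrow> a \<bullet> p = 0 \<Longrightarrow> (a \<bullet> a) * (b \<bullet> p) = 0"
  by (simp add: cs) algebra
lemma refl_sq: "x \<bullet> x = 1 \<Longrightarrow> refl_mat x ** refl_mat x = mat 1"
  unfolding refl_mat_def by (simp add: cs) algebra
lemma refl_prod: "e \<bullet> w = 0 \<Longrightarrow> refl_mat e ** refl_mat w = mat 1 - 2 *\<^sub>R outer e e - 2 *\<^sub>R outer w w"
  unfolding refl_mat_def by (simp add: cs) algebra
lemma compl: "w \<bullet> w = 1 \<Longrightarrow> e \<bullet> e = 1 \<Longrightarrow> w \<bullet> e = 0 \<Longrightarrow>
   outer (cross3 w e) (cross3 w e) = mat 1 - outer e e - outer w w"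
  by (simp add: cs) algebra
lemma refl_mv: "refl_mat w *v x = (2 * (w \<bullet> x)) *\<^sub>R w - x"
  by (simp add: refl_mat_def cs algebra_simps)
lemma refl_comm: "U *v w = w \<Longrightarrow> transpose U = U \<Longrightarrow> refl_mat w ** U = U ** refl_mat w"
  for U :: mat3
proof -
  assume a: "U *v w = w" "transpose U = U"
  show ?thesis
  proof (subst matrix_eq, intro allI)
    fix x
    have "w \<bullet> (U *v x) = w \<bullet> x" using mv_dot[of U w x] a by (simp add: inner_commute)
    then show "(refl_mat w ** U) *v x = (U ** refl_mat w) *v x"
      using a by (simp add: matrix_vector_mul_assoc[symmetric] refl_mv algebra_simps)
  qed
qed

lemma nz_comp: "(v::vec3) \<noteq> 0 \<Longrightarrow> \<exists>i. v$i \<noteq> 0" by (simp add: vec_eq_iff)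

lemma outer_zero: "outer b m = 0 \<longleftrightarrow> b = 0 \<or> m = 0" for b m :: vec3
  by (auto simp: outer_def vec_eq_iff)

lemma outer_eq:
  fixes b1 m1 b0 m :: vec3
  assumes "outer b1 m1 = outer b0 m" "b0 \<noteq> 0" "m \<noteq> 0"
  shows "\<exists>\<xi>. \<xi> \<noteq> 0 \<and> b1 = \<xi> *\<^sub>R b0 \<and> m = \<xi> *\<^sub>R m1"
proof -
  obtain i where i: "b0$i \<noteq> 0" using nz_comp assms(2) by blast
  obtain j where j: "m$j \<noteq> 0" using nz_comp assms(3) by blast
  have E: "\<And>k l. b1$k * m1$l = b0$k * m$l" using assms(1) by (simp add: outer_def vec_eq_iff)
  have m1j: "m1$j \<noteq> 0" using E[of i j] i j by auto
  define \<xi> where "\<xi> = m$j / m1$j"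
  have "\<xi> \<noteq> 0" using j m1j by (simp add: \<xi>_def)
  moreover have "b1 = \<xi> *\<^sub>R b0"
    unfolding vec_eq_iff \<xi>_def using E m1j by (auto simp: field_simps)
  moreover have "m = \<xi> *\<^sub>R m1"
  proof -
    have "\<And>l. b1$i * m1$l = b0$i * m$l" using E by auto
    moreover have "b1$i = \<xi> * b0$i" using \<open>b1 = \<xi> *\<^sub>R b0\<close> by simp
    ultimately show ?thesis unfolding vec_eq_iff using i by (auto simp: field_simps)
  qed
  ultimately show ?thesis by blast
qed

lemma G: "\<exists>p::vec3. p \<noteq> 0 \<and> p \<bullet> a = 0 \<and> p \<bullet> b = 0"
proof (cases "cross3 a b = 0")
  case False then show ?thesis using dot_cross_self by (metis inner_commute)
next
  case True
  show ?thesis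
  proof (cases "a = 0")
    case True
    show ?thesis
    proof (cases "b = 0")
      case True then show ?thesis using \<open>a = 0\<close> by (intro exI[of _ "axis 1 1"]) (simp add: axis_eq_0_iff)
    next
      case False
      have "\<exists>k. cross3 b (axis k 1) \<noteq> 0"
      proof (rule ccontr)
        assume "\<not> ?thesis"
        then have "cross3 b (axis 1 1) = 0" "cross3 b (axis 2 1) = 0" "cross3 b (axis 3 1) = 0" by auto
        then have "b = 0" by (simp add: cs axis_def)
        with False show False by simp
      qed
      then obtain k where "cross3 b (axis k 1) \<noteq> 0" by blast
      then show ?thesis using \<open>a = 0\<close> dot_cross_self by (intro exI[of _ "cross3 b (axis k 1)"]) (simp add: inner_commute)
    qed
  next
    case False
    have "\<exists>k. cross3 a (axis k 1) \<noteq> 0"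
    proof (rule ccontr)
      assume "\<not> ?thesis"
      then have "cross3 a (axis 1 1) = 0" "cross3 a (axis 2 1) = 0" "cross3 a (axis 3 1) = 0" by auto
      then have "a = 0" by (simp add: cs axis_def)
      with False show False by simp
    qed
    then obtain k where k: "cross3 a (axis k 1) \<noteq> 0" by blast
    have "(a \<bullet> a) * (b \<bullet> cross3 a (axis k 1)) = 0"
      using lagr[OF True, of "cross3 a (axis k 1)"] dot_cross_self(1)[of a "axis k 1"] by simp
    then have "b \<bullet> cross3 a (axis k 1) = 0" using False by simp
    then show ?thesis using k dot_cross_self by (intro exI[of _ "cross3 a (axis k 1)"]) (simp add: inner_commute)
  qed
qed

definition hh :: "vec3 \<Rightarrow> mat3" where "hh d = mat 1 - (2 / (d \<bullet> d)) *\<^sub>R outer d d"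

lemma hh_mv: "hh d *v x = x - ((2 / (d \<bullet> d)) * (d \<bullet> x)) *\<^sub>R d"
  by (simp add: hh_def matrix_vector_mult_diff_rdistrib scaleR_matrix_vector_assoc[symmetric] outer_mv)
lemma hh_sym: "transpose (hh d) = hh d"
  by (simp add: hh_def transpose_outer cs)
lemma hh_det: "d \<noteq> 0 \<Longrightarrow> det (hh d) = -1"
proof -
  assume "d \<noteq> 0"
  have "hh d = mat 1 + outer (- (2 / (d \<bullet> d)) *\<^sub>R d) d" by (simp add: hh_def cs)
  then show ?thesis using \<open>d \<noteq> 0\<close> by (simp add: det_I_outer)
qed
lemma hh_orth: "d \<noteq> 0 \<Longrightarrow> orthogonal_matrix (hh d)"
proof -
  assume d: "d \<noteq> 0"
  have "transpose (hh d) ** hh d = mat 1"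
  proof (subst matrix_eq, intro allI)
    fix x
    define c where "c = (2 / (d \<bullet> d)) * (d \<bullet> x)"
    have 1: "hh d *v x = x - c *\<^sub>R d" by (simp add: hh_mv c_def)
    have "d \<bullet> (x - c *\<^sub>R d) = - (d \<bullet> x)"
      using d by (simp add: c_def inner_diff_right field_simps)
    then have 3: "(2 / (d \<bullet> d)) * (d \<bullet> (x - c *\<^sub>R d)) = - c" by (simp add: c_def)
    have "hh d *v (hh d *v x) = (x - c *\<^sub>R d) - ((2 / (d \<bullet> d)) * (d \<bullet> (x - c *\<^sub>R d))) *\<^sub>R d"
      unfolding 1 by (rule hh_mv)
    also have "\<dots> = x" unfolding 3 by simp
    finally have "hh d *v (hh d *v x) = x" .
    then show "(transpose (hh d) ** hh d) *v x = mat 1 *v x"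
      by (simp add: hh_sym matrix_vector_mul_assoc[symmetric])
  qed
  then show ?thesis by (simp add: orthogonal_matrix)
qed

lemma cof_zero_all: "cof (A::mat3) = 0 \<Longrightarrow> cross3 (A$i) (A$j) = 0"
proof -
  assume "cof A = 0"
  note r = cof_zero_rows[OF this]
  show ?thesis
    using exhaust_3[of i] exhaust_3[of j] r
    by (auto simp: cross_skew[of "A$2" "A$1"] cross_skew[of "A$3" "A$1"] cross_skew[of "A$3" "A$2"])
qed

lemma mat_col: "(C *v axis j 1) $ i = C $ i $ j" for C :: mat3
  by (simp add: matrix_vector_mult_def axis_def if_distrib cong: if_cong)

lemma transpose_diff3: "transpose (X - Y) = transpose X - transpose (Y::mat3)"
  by (simp add: cs)
lemma transpose_add3: "transpose (X + Y) = transpose X + transpose (Y::mat3)"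
  by (simp add: cs)
lemma mult_scaleR3: "A ** (f *\<^sub>R M) = f *\<^sub>R (A ** M)" for A M :: mat3
  by (simp add: cs algebra_simps sum_distrib_left)
lemma outer_lin: "outer b m + f *\<^sub>R outer (c *\<^sub>R b) e = outer b (m + f *\<^sub>R (c *\<^sub>R e))" for b m e :: vec3
  by (simp add: cs algebra_simps)
lemma fact_A: "U ** U - mat 1 = (U + mat 1) ** (U - mat 1)" for U :: mat3
  by (simp add: cs algebra_simps)

lemma L:
  fixes U :: mat3 and e w :: vec3
  assumes Usym: "transpose U = U" and en: "norm e = 1"
    and eu: "\<forall>e'. norm e' = 1 \<and> refl_mat e ** U ** refl_mat e = refl_mat e' ** U ** refl_mat e' \<longrightarrow> e' = e \<or> e' = - e"
    and wf: "U *v w = w" and we: "w \<bullet> e = 0"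
  shows "w = 0"
proof (rule ccontr)
  assume wnz: "w \<noteq> 0"
  define w' where "w' = (1 / norm w) *\<^sub>R w"
  have ww: "w' \<bullet> w' = 1" using wnz by (simp add: w'_def power2_norm_eq_inner[symmetric] field_simps)
  have nw': "norm w' = 1" using ww by (simp add: norm_eq_1)
  have wf': "U *v w' = w'" using wf by (simp add: w'_def matrix_vector_mult_scaleR)
  have we': "w' \<bullet> e = 0" using we by (simp add: w'_def)
  have ee: "e \<bullet> e = 1" using en by (simp add: norm_eq_1)
  define e' where "e' = cross3 w' e"
  have h0: "refl_mat e' = mat 1 - 2 *\<^sub>R outer e e - 2 *\<^sub>R outer w' w'"
    unfolding refl_mat_def e'_def compl[OF ww ee we'] by (simp add: cs)
  have h1: "refl_mat e ** refl_mat w' = mat 1 - 2 *\<^sub>R outer e e - 2 *\<^sub>R outer w' w'"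
    using refl_prod[of e w'] we' by (simp add: inner_commute)
  have h2: "refl_mat w' ** refl_mat e = mat 1 - 2 *\<^sub>R outer w' w' - 2 *\<^sub>R outer e e"
    using refl_prod[of w' e] we' by simp
  have h3: "mat 1 - 2 *\<^sub>R outer w' w' - 2 *\<^sub>R outer e e = mat 1 - 2 *\<^sub>R outer e e - 2 *\<^sub>R outer w' w'"
    by (simp add: algebra_simps)
  have P1: "refl_mat e' = refl_mat e ** refl_mat w'" using h0 h1 by simp
  have P2: "refl_mat e' = refl_mat w' ** refl_mat e" using h0 h2 h3 by simp
  have QUQ: "refl_mat w' ** U ** refl_mat w' = U"
  proof -
    have "refl_mat w' ** U ** refl_mat w' = U ** refl_mat w' ** refl_mat w'"
      using refl_comm[OF wf' Usym] by simp
    also have "\<dots> = U" using refl_sq[OF ww] by (simp add: matrix_mul_assoc[symmetric])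
    finally show ?thesis .
  qed
  have "refl_mat e' ** U ** refl_mat e' = refl_mat e ** (refl_mat w' ** U ** refl_mat w') ** refl_mat e"
    unfolding P1 apply (subst (2) P1[symmetric]) unfolding P2 by (simp add: matrix_mul_assoc)
  then have eq: "refl_mat e ** U ** refl_mat e = refl_mat e' ** U ** refl_mat e'" using QUQ by simp
  have "(norm e')\<^sup>2 + (w' \<bullet> e)\<^sup>2 = (norm w' * norm e)\<^sup>2" unfolding e'_def by (rule norm_cross_dot)
  then have "(norm e')\<^sup>2 = 1" using nw' en we' by simp
  then have ne': "norm e' = 1" by (smt (verit) norm_ge_zero power2_eq_1_iff)
  have "e' \<bullet> e = 0" unfolding e'_def by (rule dot_cross_self(3))
  moreover have "e' = e \<or> e' = - e" using eu ne' eq by blast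
  ultimately show False using ee by auto
qed
theorem theorem2:
  fixes U Uhat Rhat :: mat3 and e nI aI :: vec3
    and R :: "nat \<Rightarrow> int \<Rightarrow> mat3" and b m :: "nat \<Rightarrow> int \<Rightarrow> vec3"
  assumes U_spd: "sym_pos_def U"
    and e_unit: "norm e = 1"
    and Uhat_def: "Uhat = refl_mat e ** U ** refl_mat e"
    and Uhat_ne: "Uhat \<noteq> U"
    and e_unique: "\<forall>e'. norm e' = 1 \<and> Uhat = refl_mat e' ** U ** refl_mat e' \<longrightarrow> e' = e \<or> e' = - e"
    and nI_def: "nI = e"
    and aI_def: "aI = 2 *\<^sub>R ((1 / (norm (matrix_inv U *v e))\<^sup>2) *\<^sub>R (matrix_inv U *v e) - U *v e)"
    and Rhat_rot: "rotation_matrix Rhat"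
    and Rhat_eq: "Rhat ** Uhat = U + outer aI nI"
    and aI_nz: "aI \<noteq> 0"
    and CC1: "middle_eigenvalue U 1"
    and CC2: "aI \<bullet> ((U ** cof (U ** U - mat 1)) *v nI) = 0"
    and CC3: "trace (U ** U) - det (U ** U) - (norm aI)\<^sup>2 * (norm nI)\<^sup>2 / 4 - 2 \<ge> 0"
    and sol: "\<forall>f\<in>{0,1}. \<forall>\<kappa>\<in>{1,-1}. rotation_matrix (R f \<kappa>) \<and>
               R f \<kappa> ** (U + real f *\<^sub>R outer aI nI) = mat 1 + outer (b f \<kappa>) (m f \<kappa>)"
    and sol_distinct: "\<forall>f\<in>{0,1}. (R f 1, outer (b f 1) (m f 1)) \<noteq> (R f (-1), outer (b f (-1)) (m f (-1)))"
    and sol_all: "\<forall>f\<in>{0,1}. \<forall>Q bb mm. rotation_matrix Q \<and>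
               Q ** (U + real f *\<^sub>R outer aI nI) = mat 1 + outer bb mm \<longrightarrow>
               (Q, outer bb mm) = (R f 1, outer (b f 1) (m f 1)) \<or>
               (Q, outer bb mm) = (R f (-1), outer (b f (-1)) (m f (-1)))"
  shows "\<exists>\<sigma>\<in>{1,-1}. \<exists>\<sigma>s\<in>{1,-1}. \<exists>\<xi>::real. \<xi> \<noteq> 0 \<and>
           R 1 \<sigma>s = R 0 \<sigma> \<and> b 1 \<sigma>s = \<xi> *\<^sub>R b 0 \<sigma> \<and>
           R 0 \<sigma> ** U = mat 1 + outer (b 0 \<sigma>) (m 0 \<sigma>) \<and>
           R 0 \<sigma> ** (U + outer aI nI) = mat 1 + outer (b 0 \<sigma>) (\<xi> *\<^sub>R m 1 \<sigma>s) \<and>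
           (\<forall>f::real. 0 \<le> f \<and> f \<le> 1 \<longrightarrow>
              R 0 \<sigma> ** (U + f *\<^sub>R outer aI nI) =
                mat 1 + outer (b 0 \<sigma>) ((f * \<xi>) *\<^sub>R m 1 \<sigma>s + (1 - f) *\<^sub>R m 0 \<sigma>)) \<and>
           R 0 \<sigma> ** U - mat 1 = outer (b 0 \<sigma>) (m 0 \<sigma>) \<and>
           R 0 \<sigma> ** Rhat ** Uhat - mat 1 = outer (b 0 \<sigma>) (\<xi> *\<^sub>R m 1 \<sigma>s) \<and>
           R 0 \<sigma> ** Rhat ** Uhat - R 0 \<sigma> ** U = outer (R 0 \<sigma> *v aI) nI \<and>
           (\<exists>c::real. c \<noteq> 0 \<and> c *\<^sub>R nI = \<xi> *\<^sub>R m 1 \<sigma>s - m 0 \<sigma>) \<and>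
           (\<exists>p::vec3. p \<noteq> 0 \<and> p \<bullet> m 0 \<sigma> = 0 \<and> p \<bullet> m 1 \<sigma>s = 0 \<and> p \<bullet> nI = 0)"
proof -
  have Usym: "transpose U = U" and Upos: "\<And>x. x \<noteq> 0 \<Longrightarrow> x \<bullet> (U *v x) > 0"
    using U_spd unfolding sym_pos_def_def by auto
  have ee: "e \<bullet> e = 1" using e_unit by (simp add: norm_eq_1)
  have eu: "\<forall>e'. norm e' = 1 \<and> refl_mat e ** U ** refl_mat e = refl_mat e' ** U ** refl_mat e' \<longrightarrow> e' = e \<or> e' = - e"
    using e_unique Uhat_def by simp
  have Lw: "\<And>w. U *v w = w \<Longrightarrow> w \<bullet> e = 0 \<Longrightarrow> w = 0"
    using L[OF Usym e_unit eu] by blast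
  have Ue_ne: "U *v e \<noteq> e"
  proof
    assume h: "U *v e = e"
    have "Uhat = U ** refl_mat e ** refl_mat e"
      unfolding Uhat_def using refl_comm[OF h Usym] by simp
    also have "\<dots> = U" using refl_sq[OF ee] by (simp add: matrix_mul_assoc[symmetric])
    finally show False using Uhat_ne by simp
  qed
  have "\<forall>x. U *v x = 0 \<longrightarrow> x = 0"
  proof (intro allI impI, rule ccontr)
    fix x assume "U *v x = 0" "x \<noteq> 0"
    then show False using Upos[of x] by simp
  qed
  then obtain B where "B ** U = mat 1" using matrix_left_invertible_ker by blast
  then have ex: "\<exists>A'. U ** A' = mat 1 \<and> A' ** U = mat 1" using matrix_left_right_inverse by blast
  have "U ** matrix_inv U = mat 1 \<and> matrix_inv U ** U = mat 1"
    unfolding matrix_inv_def by (rule someI_ex[OF ex])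
  then have Ui: "U ** matrix_inv U = mat 1" "matrix_inv U ** U = mat 1" by auto
  define u where "u = matrix_inv U *v e"
  have Uu: "U *v u = e" using Ui by (simp add: u_def matrix_vector_mul_assoc)
  define A where "A = U ** U - mat 1"
  define C where "C = cof A"
  obtain l1 l3 where "\<forall>t. det (U - t *\<^sub>R mat 1) = (l1 - t) * (1 - t) * (l3 - t)"
    using CC1 unfolding middle_eigenvalue_def by blast
  then have "det (U - 1 *\<^sub>R mat 1) = (l1 - 1) * (1 - 1) * (l3 - 1)" by blast
  then have "det (U - mat 1) = 0" by simp
  then have detA: "det A = 0" unfolding A_def fact_A by (simp add: det_mul)
  have K: "U *v w = w" if "A *v w = 0" for w
  proof -
    define z where "z = U *v w - w"
    have "(U + mat 1) *v z = A *v w"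
      unfolding A_def fact_A z_def by (simp add: matrix_vector_mul_assoc[symmetric] algebra_simps)
    then have "U *v z = - z" using that by (simp add: algebra_simps eq_neg_iff_add_eq_0)
    have "z = 0"
    proof (rule ccontr)
      assume "z \<noteq> 0"
      then have "0 < z \<bullet> (U *v z)" by (rule Upos)
      then show False using \<open>U *v z = - z\<close> inner_ge_zero[of z] by simp
    qed
    then show ?thesis by (simp add: z_def)
  qed
  have Asym: "transpose A = A" unfolding A_def by (simp add: transpose_diff3 matrix_transpose_mul Usym)
  have Csym: "transpose C = C" unfolding C_def using cof_transpose[of A] Asym by simp
  have AC: "A ** C = 0" using adj[of A] detA Csym by (simp add: C_def)
  have colfix: "U *v (C *v y) = C *v y" for y
    using K[of "C *v y"] AC by (simp add: matrix_vector_mul_assoc)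
  have UC: "U ** C = C" by (subst matrix_eq) (simp add: matrix_vector_mul_assoc[symmetric] colfix)
  have "C ** U = transpose (U ** C)" by (simp add: matrix_transpose_mul Csym Usym)
  then have CU: "C ** U = C" using UC Csym by simp
  have "C ** matrix_inv U = (C ** U) ** matrix_inv U" using CU by simp
  also have "\<dots> = C ** (U ** matrix_inv U)" by (simp add: matrix_mul_assoc)
  also have "\<dots> = C" using Ui by simp
  finally have CUi: "C ** matrix_inv U = C" .
  have Cnz: "C \<noteq> 0"
  proof
    assume C0: "C = 0"
    have cr: "\<And>i j. cross3 (A$i) (A$j) = 0" using cof_zero_all C0 by (simp add: C_def)
    obtain p where p: "p \<noteq> 0" "A *v p = 0" "p \<bullet> e = 0"
    proof (cases "A = 0")
      case True
      obtain p where "p \<noteq> 0" "p \<bullet> e = 0" using G[of e e] by blast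
      then show ?thesis using that True by simp
    next
      case False
      then obtain i where i: "A $ i \<noteq> 0" by (auto simp: vec_eq_iff)
      obtain p where p: "p \<noteq> 0" "p \<bullet> A$i = 0" "p \<bullet> e = 0" using G[of "A$i" e] by blast
      have "A $ j \<bullet> p = 0" for j
        using lagr[OF cr[of i j], of p] p i by (simp add: inner_commute)
      then have "A *v p = 0" by (simp add: vec_eq_iff mv_comp)
      then show ?thesis using that p by simp
    qed
    then show False using K Lw by blast
  qed
  define x where "x = C *v e"
  have Ux: "U *v x = x" by (simp add: x_def colfix)
  have xe: "x \<bullet> e \<noteq> 0"
  proof
    assume h: "x \<bullet> e = 0"
    then have x0: "x = 0" using Lw Ux by blast
    have "C *v axis j 1 = 0" for j
    proof -
      have "(C *v axis j 1) \<bullet> e = axis j 1 \<bullet> x"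
        unfolding x_def mv_dot Csym ..
      also have "\<dots> = 0" using x0 by simp
      finally show ?thesis using Lw colfix by blast
    qed
    then have "C $ i $ j = 0" for i j using mat_col[of C j i] by simp
    then have "C = 0" by (simp add: vec_eq_iff)
    then show False using Cnz by simp
  qed
  \<comment> \<open>CC2 gives norm u = 1\<close>
  define s where "s = (norm u)\<^sup>2"
  have aIu: "aI = 2 *\<^sub>R ((1 / s) *\<^sub>R u - U *v e)" unfolding aI_def s_def u_def ..
  have CaI: "C *v aI = 2 *\<^sub>R ((1 / s) *\<^sub>R x - x)"
  proof -
    have "C *v u = x" unfolding u_def x_def by (simp add: matrix_vector_mul_assoc CUi)
    moreover have "C *v (U *v e) = x" unfolding x_def by (simp add: matrix_vector_mul_assoc CU)
    ultimately show ?thesis unfolding aIu by (simp add: algebra_simps matrix_vector_mult_scaleR)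
  qed
  have "aI \<bullet> (C *v e) = e \<bullet> (C *v aI)"
    using mv_dot[of C e aI] Csym by (simp add: inner_commute)
  moreover have "aI \<bullet> (C *v e) = 0" using CC2 UC nI_def unfolding C_def A_def by simp
  moreover have "e \<bullet> (C *v aI) = 2 * ((1 / s) * (e \<bullet> x) - e \<bullet> x)"
    unfolding CaI by (simp add: inner_diff_right)
  ultimately have "2 * ((1 / s) * (e \<bullet> x) - e \<bullet> x) = 0" by metis
  then have "(1 / s) * (e \<bullet> x) - e \<bullet> x = 0" by (metis mult_eq_0_iff zero_neq_numeral)
  then have "(1 / s - 1) * (e \<bullet> x) = 0" by (simp only: left_diff_distrib mult_1)
  then have "1 / s = 1" using xe by (simp add: inner_commute)
  then have s1: "s = 1" by (simp add: field_simps split: if_splits)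
  then have uu: "u \<bullet> u = 1" by (simp add: s_def power2_norm_eq_inner)
  have aIu1: "aI = 2 *\<^sub>R (u - U *v e)" using aIu s1 by simp
  have ux: "u \<bullet> x = e \<bullet> x"
  proof -
    have "u \<bullet> (U *v x) = (U *v u) \<bullet> x" using mv_dot[of U u x] Usym by simp
    then show ?thesis using Ux Uu by simp
  qed
  have ue: "u \<noteq> e" using Uu Ue_ne by auto
  define n where "n = cross3 x e"
  have nnz: "n \<noteq> 0"
  proof
    assume n0: "n = 0"
    have "(norm n)\<^sup>2 + (x \<bullet> e)\<^sup>2 = (norm x * norm e)\<^sup>2" unfolding n_def by (rule norm_cross_dot)
    then have xx: "x \<bullet> x = (x \<bullet> e)\<^sup>2" using n0 e_unit by (simp add: power2_norm_eq_inner)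
    define z where "z = x - (x \<bullet> e) *\<^sub>R e"
    have "z \<bullet> z = 0" unfolding z_def using xx ee
      by (simp add: inner_diff_left inner_diff_right inner_commute power2_eq_square)
    then have xeq: "x = (x \<bullet> e) *\<^sub>R e" by (simp add: z_def)
    have "(x \<bullet> e) *\<^sub>R (U *v e) = U *v ((x \<bullet> e) *\<^sub>R e)" by (simp add: matrix_vector_mult_scaleR)
    also have "\<dots> = U *v x" by (rule arg_cong[OF xeq[symmetric]])
    also have "\<dots> = x" by (rule Ux)
    also have "\<dots> = (x \<bullet> e) *\<^sub>R e" by (rule xeq)
    finally have "(x \<bullet> e) *\<^sub>R (U *v e) = (x \<bullet> e) *\<^sub>R e" .
    then show False using xe Ue_ne by simp
  qed
  define d where "d = u - e"
  have dnz: "d \<noteq> 0" using ue by (simp add: d_def)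
  define Rr where "Rr = hh n ** hh d"
  have dd: "d \<bullet> d = 2 * (d \<bullet> u)" unfolding d_def using uu ee
    by (simp add: inner_diff_left inner_diff_right inner_commute)
  have "d \<bullet> d \<noteq> 0" using dnz by simp
  then have du: "d \<bullet> u \<noteq> 0" using dd by (metis mult_zero_right)
  have "(2 / (d \<bullet> d)) * (d \<bullet> u) = 1" unfolding dd using \<open>d \<bullet> u \<noteq> 0\<close> by simp
  then have "hh d *v u = u - d" using hh_mv[of d u] du by simp
  then have H1u: "hh d *v u = e" by (simp add: d_def)
  have "d \<bullet> x = 0" using ux by (simp add: d_def inner_diff_left)
  then have H1x: "hh d *v x = x" by (simp add: hh_mv)
  have H2e: "hh n *v e = e" by (simp add: hh_mv n_def dot_cross_self)
  have "n \<bullet> x = 0" using dot_cross_self(1)[of x e] by (simp add: n_def inner_commute)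
  then have H2x: "hh n *v x = x" by (simp add: hh_mv)
  have Rru: "Rr *v u = e" and Rrx: "Rr *v x = x"
    by (simp_all add: Rr_def matrix_vector_mul_assoc[symmetric] H1u H1x H2e H2x)
  have rotRr: "rotation_matrix Rr"
    unfolding rotation_matrix_def Rr_def
    using hh_orth[OF nnz] hh_orth[OF dnz] hh_det[OF nnz] hh_det[OF dnz]
    by (simp add: orthogonal_matrix_mul det_mul)
  then have orthRr: "transpose Rr ** Rr = mat 1" by (simp add: rotation_matrix_def orthogonal_matrix)
  have tRR: "transpose Rr *v (Rr *v v) = v" for v by (simp add: matrix_vector_mul_assoc orthRr)
  have tRe: "transpose Rr *v e = u" using tRR[of u] Rru by simp
  have tRx: "transpose Rr *v x = x" using tRR[of x] Rrx by simp
  define M where "M = transpose (Rr ** U) - mat 1"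
  have tF: "transpose (Rr ** U) = U ** transpose Rr" by (simp add: matrix_transpose_mul Usym)
  have Mx: "M *v x = 0" unfolding M_def tF
    by (simp only: matrix_vector_mult_diff_rdistrib matrix_vector_mul_assoc[symmetric] tRx Ux matrix_vector_mul_lid diff_self)
  have Me: "M *v e = 0" unfolding M_def tF
    by (simp only: matrix_vector_mult_diff_rdistrib matrix_vector_mul_assoc[symmetric] tRe Uu matrix_vector_mul_lid diff_self)
  define y where "y = (1 / (n \<bullet> n)) *\<^sub>R (M *v n)"
  have "M = outer y n" using RO[OF Mx Me] nnz by (simp add: y_def n_def)
  moreover have "transpose (Rr ** U) = mat 1 + M" by (simp add: M_def)
  ultimately have "transpose (Rr ** U) = mat 1 + outer y n" by simp
  then have "transpose (transpose (Rr ** U)) = mat 1 + outer n y"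
    by (simp add: transpose_add3 transpose_outer)
  then have F0: "Rr ** (U + real 0 *\<^sub>R outer aI nI) = mat 1 + outer n y" by simp
  have "(Rr, outer n y) = (R 0 1, outer (b 0 1) (m 0 1)) \<or> (Rr, outer n y) = (R 0 (-1), outer (b 0 (-1)) (m 0 (-1)))"
    using bspec[OF sol_all insertI1, rule_format, of Rr n y] rotRr F0 by blast
  then obtain \<sigma> where \<sigma>: "\<sigma> \<in> {1, -1}" "R 0 \<sigma> = Rr" "outer n y = outer (b 0 \<sigma>) (m 0 \<sigma>)"
    by (metis insertCI prod.inject)
  define b0 where "b0 = b 0 \<sigma>"
  define m0 where "m0 = m 0 \<sigma>"
  have "\<forall>\<kappa>\<in>{1,-1}. rotation_matrix (R 0 \<kappa>) \<and>
               R 0 \<kappa> ** (U + real 0 *\<^sub>R outer aI nI) = mat 1 + outer (b 0 \<kappa>) (m 0 \<kappa>)"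
    using bspec[OF sol, of 0] by simp
  from bspec[OF this \<sigma>(1)] have R0U: "Rr ** U = mat 1 + outer b0 m0"
    using \<sigma>(2) by (simp add: b0_def m0_def)
  have R0aI: "Rr *v aI = (- 2 * (m0 \<bullet> e)) *\<^sub>R b0"
  proof -
    have "Rr *v (U *v e) = e + (m0 \<bullet> e) *\<^sub>R b0"
      by (simp add: matrix_vector_mul_assoc R0U matrix_vector_mult_add_rdistrib outer_mv)
    then show ?thesis unfolding aIu1 using Rru
      by (simp add: matrix_vector_mult_scaleR matrix_vector_mult_diff_distrib algebra_simps)
  qed
  define c where "c = - 2 * (m0 \<bullet> e)"
  define m' where "m' = m0 + c *\<^sub>R e"
  have Rf: "Rr ** (U + f *\<^sub>R outer aI nI) = mat 1 + outer b0 (m0 + f *\<^sub>R (c *\<^sub>R e))" for f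
  proof -
    have "Rr ** (U + f *\<^sub>R outer aI nI) = mat 1 + outer b0 m0 + f *\<^sub>R outer (c *\<^sub>R b0) e"
      by (simp add: matrix_add_ldistrib mult_scaleR3 mult_outer R0U R0aI c_def nI_def)
    also have "\<dots> = mat 1 + outer b0 (m0 + f *\<^sub>R (c *\<^sub>R e))" by (simp add: outer_lin)
    finally show ?thesis .
  qed
  have F1: "Rr ** (U + real 1 *\<^sub>R outer aI nI) = mat 1 + outer b0 m'"
    using Rf[of 1] by (simp add: m'_def)
  have b0m0: "b0 \<noteq> 0 \<and> m0 \<noteq> 0"
  proof (rule ccontr)
    assume "\<not> ?thesis"
    then have "Rr ** U = mat 1" using R0U by (auto simp: outer_zero)
    then have "transpose Rr ** (Rr ** U) = transpose Rr" by simp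
    then have UR: "U = transpose Rr" using orthRr by (simp add: matrix_mul_assoc)
    have "U ** U = transpose U ** U" using Usym by simp
    also have "\<dots> = Rr ** transpose Rr" unfolding UR by simp
    also have "\<dots> = mat 1" using rotRr by (simp add: rotation_matrix_def orthogonal_matrix_def)
    finally have "U ** U = mat 1" .
    then have "C = 0" by (simp add: C_def A_def cof_zero)
    then show False using Cnz by simp
  qed
  have cnz: "c \<noteq> 0"
  proof
    assume "c = 0"
    then have "Rr *v aI = 0" using R0aI by (simp add: c_def)
    then have "aI = 0" using tRR[of aI] by simp
    then show False using aI_nz by simp
  qed
  have m'nz: "m' \<noteq> 0"
  proof
    assume "m' = 0"
    then have "m' \<bullet> e = 0" by simp
    moreover have "m' \<bullet> e = - (m0 \<bullet> e)" using ee by (simp add: m'_def c_def inner_add_left inner_diff_left)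
    ultimately show False using cnz by (simp add: c_def)
  qed
  have rot1: "rotation_matrix Rr" by (rule rotRr)
  have "(Rr, outer b0 m') = (R 1 1, outer (b 1 1) (m 1 1)) \<or> (Rr, outer b0 m') = (R 1 (-1), outer (b 1 (-1)) (m 1 (-1)))"
    using bspec[OF sol_all, of 1, rule_format, of Rr b0 m'] rotRr F1 by simp
  then obtain \<sigma>s where \<sigma>s: "\<sigma>s \<in> {1, -1}" "R 1 \<sigma>s = Rr" "outer b0 m' = outer (b 1 \<sigma>s) (m 1 \<sigma>s)"
    by (metis insertCI prod.inject)
  obtain \<xi> where \<xi>: "\<xi> \<noteq> 0" "b 1 \<sigma>s = \<xi> *\<^sub>R b0" "m' = \<xi> *\<^sub>R m 1 \<sigma>s"
    using outer_eq[OF \<sigma>s(3)[symmetric]] b0m0 m'nz by blast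
  obtain p where p: "p \<noteq> 0" "p \<bullet> m0 = 0" "p \<bullet> e = 0" using G[of m0 e] by blast
  have pm1: "p \<bullet> m 1 \<sigma>s = 0"
  proof -
    have "p \<bullet> m' = 0" using p by (simp add: m'_def inner_add_right)
    then show ?thesis using \<xi>(1,3) by simp
  qed
  have RUa: "Rr ** (U + outer aI nI) = mat 1 + outer b0 (\<xi> *\<^sub>R m 1 \<sigma>s)"
    using F1 \<xi>(3) by simp
  have RhU: "Rr ** Rhat ** Uhat = Rr ** (U + outer aI nI)"
    by (simp add: matrix_mul_assoc[symmetric] Rhat_eq)
  show ?thesis
  proof (rule bexI[OF _ \<sigma>(1)], rule bexI[OF _ \<sigma>s(1)], rule exI[of _ \<xi>], intro conjI)
    show "\<xi> \<noteq> 0" by fact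
    show "R 1 \<sigma>s = R 0 \<sigma>" using \<sigma> \<sigma>s by simp
    show "b 1 \<sigma>s = \<xi> *\<^sub>R b 0 \<sigma>" using \<xi> by (simp add: b0_def)
    show "R 0 \<sigma> ** U = mat 1 + outer (b 0 \<sigma>) (m 0 \<sigma>)" using R0U \<sigma> by (simp add: b0_def m0_def)
    show "R 0 \<sigma> ** (U + outer aI nI) = mat 1 + outer (b 0 \<sigma>) (\<xi> *\<^sub>R m 1 \<sigma>s)"
      using RUa \<sigma> by (simp add: b0_def)
    show "\<forall>f. 0 \<le> f \<and> f \<le> 1 \<longrightarrow> R 0 \<sigma> ** (U + f *\<^sub>R outer aI nI) =
            mat 1 + outer (b 0 \<sigma>) ((f * \<xi>) *\<^sub>R m 1 \<sigma>s + (1 - f) *\<^sub>R m 0 \<sigma>)"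
    proof (intro allI impI)
      fix f :: real
      have "(f * \<xi>) *\<^sub>R m 1 \<sigma>s = f *\<^sub>R (\<xi> *\<^sub>R m 1 \<sigma>s)" by simp
      also have "\<dots> = f *\<^sub>R m'" using \<xi>(3) by simp
      finally have "(f * \<xi>) *\<^sub>R m 1 \<sigma>s + (1 - f) *\<^sub>R m0 = f *\<^sub>R m' + (1 - f) *\<^sub>R m0" by simp
      also have "\<dots> = m0 + f *\<^sub>R (c *\<^sub>R e)" by (simp add: m'_def algebra_simps)
      finally have "(f * \<xi>) *\<^sub>R m 1 \<sigma>s + (1 - f) *\<^sub>R m0 = m0 + f *\<^sub>R (c *\<^sub>R e)" .
      then show "R 0 \<sigma> ** (U + f *\<^sub>R outer aI nI) =
            mat 1 + outer (b 0 \<sigma>) ((f * \<xi>) *\<^sub>R m 1 \<sigma>s + (1 - f) *\<^sub>R m 0 \<sigma>)"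
        using Rf[of f] \<sigma> by (simp add: b0_def m0_def)
    qed
    show "R 0 \<sigma> ** U - mat 1 = outer (b 0 \<sigma>) (m 0 \<sigma>)" using R0U \<sigma> by (simp add: b0_def m0_def)
    show "R 0 \<sigma> ** Rhat ** Uhat - mat 1 = outer (b 0 \<sigma>) (\<xi> *\<^sub>R m 1 \<sigma>s)"
      using RhU RUa \<sigma> by (simp add: b0_def)
    show "R 0 \<sigma> ** Rhat ** Uhat - R 0 \<sigma> ** U = outer (R 0 \<sigma> *v aI) nI"
      using RhU \<sigma> by (simp add: matrix_add_ldistrib mult_outer)
    show "\<exists>c. c \<noteq> 0 \<and> c *\<^sub>R nI = \<xi> *\<^sub>R m 1 \<sigma>s - m 0 \<sigma>"
    proof -
      have "\<xi> *\<^sub>R m 1 \<sigma>s - m0 = c *\<^sub>R e" using \<xi>(3)[symmetric] by (simp add: m'_def)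
      then show "\<exists>c. c \<noteq> 0 \<and> c *\<^sub>R nI = \<xi> *\<^sub>R m 1 \<sigma>s - m 0 \<sigma>"
        using cnz by (intro exI[of _ c]) (simp add: m0_def nI_def)
    qed
    show "\<exists>p. p \<noteq> 0 \<and> p \<bullet> m 0 \<sigma> = 0 \<and> p \<bullet> m 1 \<sigma>s = 0 \<and> p \<bullet> nI = 0"
      using p pm1 by (intro exI[of _ p]) (simp add: m0_def nI_def)
  qed
qed

end
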